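(* Let $T$ be a non-special Aronszajn tree and $\mathbb{P}$ an $\aleph_1$-$\sigma$-linked poset. Then $\mathbb{P}$ forces that $T$ is not special.
   Context: An Aronszajn tree (height $\omega_1$, countable levels and chains) is special if it is a union of countably many antichains. A poset $\mathbb{P}$ is $\aleph_1$-$\sigma$-linked if for every sequence $\langle p_\alpha:\alpha<\omega_1\rangle$ of conditions, $\{p_\alpha:\alpha<\omega_1\}$ is covered by countably many linked (pairwise compatible) subsets of $\mathbb{P}$. *)

theory Defs
  imports Main "HOL-Library.Countable_Set"
begin

definition pred_set :: "'a set \<Rightarrow> ('a \<Rightarrow> 'a \<Rightarrow> bool) \<Rightarrow> 'a \<Rightarrow> 'a set" where
  "pred_set T lt t = {s \<in> T. lt s t}"

text \<open>The (reflexive) well-order on the predecessors of t; its order type is the height of t.\<close>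
definition pred_rel :: "'a set \<Rightarrow> ('a \<Rightarrow> 'a \<Rightarrow> bool) \<Rightarrow> 'a \<Rightarrow> 'a rel" where
  "pred_rel T lt t = {(x, y). x \<in> pred_set T lt t \<and> y \<in> pred_set T lt t \<and> (lt x y \<or> x = y)}"

definition is_tree :: "'a set \<Rightarrow> ('a \<Rightarrow> 'a \<Rightarrow> bool) \<Rightarrow> bool" where
  "is_tree T lt \<longleftrightarrow>
     (\<forall>x\<in>T. \<not> lt x x) \<and>
     (\<forall>x\<in>T. \<forall>y\<in>T. \<forall>z\<in>T. lt x y \<longrightarrow> lt y z \<longrightarrow> lt x z) \<and>
     (\<forall>t\<in>T. Well_order (pred_rel T lt t))"

definition tree_level :: "'a set \<Rightarrow> ('a \<Rightarrow> 'a \<Rightarrow> bool) \<Rightarrow> 'a \<Rightarrow> 'a set" where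
  "tree_level T lt t = {u \<in> T. (pred_rel T lt u, pred_rel T lt t) \<in> ordIso}"

definition is_chain :: "'a set \<Rightarrow> ('a \<Rightarrow> 'a \<Rightarrow> bool) \<Rightarrow> 'a set \<Rightarrow> bool" where
  "is_chain T lt C \<longleftrightarrow> C \<subseteq> T \<and> (\<forall>x\<in>C. \<forall>y\<in>C. x = y \<or> lt x y \<or> lt y x)"

definition is_antichain :: "'a set \<Rightarrow> ('a \<Rightarrow> 'a \<Rightarrow> bool) \<Rightarrow> 'a set \<Rightarrow> bool" where
  "is_antichain T lt A \<longleftrightarrow> A \<subseteq> T \<and> (\<forall>x\<in>A. \<forall>y\<in>A. \<not> lt x y)"

text \<open>Aronszajn tree: height omega_1 (every node has countably many predecessors,
  and T is uncountable with countable levels, so all levels below omega_1 are nonempty),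
  countable levels, countable chains.\<close>
definition aronszajn :: "'a set \<Rightarrow> ('a \<Rightarrow> 'a \<Rightarrow> bool) \<Rightarrow> bool" where
  "aronszajn T lt \<longleftrightarrow>
     is_tree T lt \<and>
     \<not> countable T \<and>
     (\<forall>t\<in>T. countable (pred_set T lt t)) \<and>
     (\<forall>t\<in>T. countable (tree_level T lt t)) \<and>
     (\<forall>C. is_chain T lt C \<longrightarrow> countable C)"

definition special :: "'a set \<Rightarrow> ('a \<Rightarrow> 'a \<Rightarrow> bool) \<Rightarrow> bool" where
  "special T lt \<longleftrightarrow> (\<exists>A :: nat \<Rightarrow> 'a set. (\<forall>n. is_antichain T lt (A n)) \<and> T = (\<Union>n. A n))"

text \<open>Forcing convention: le q p means q is stronger than (extends) p.\<close>
definition is_poset :: "'p set \<Rightarrow> ('p \<Rightarrow> 'p \<Rightarrow> bool) \<Rightarrow> bool" where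
  "is_poset P le \<longleftrightarrow>
     (\<forall>p\<in>P. le p p) \<and>
     (\<forall>p\<in>P. \<forall>q\<in>P. \<forall>r\<in>P. le p q \<longrightarrow> le q r \<longrightarrow> le p r) \<and>
     (\<forall>p\<in>P. \<forall>q\<in>P. le p q \<longrightarrow> le q p \<longrightarrow> p = q)"

definition compatible :: "'p set \<Rightarrow> ('p \<Rightarrow> 'p \<Rightarrow> bool) \<Rightarrow> 'p \<Rightarrow> 'p \<Rightarrow> bool" where
  "compatible P le p q \<longleftrightarrow> (\<exists>r\<in>P. le r p \<and> le r q)"

definition linked :: "'p set \<Rightarrow> ('p \<Rightarrow> 'p \<Rightarrow> bool) \<Rightarrow> 'p set \<Rightarrow> bool" where
  "linked P le L \<longleftrightarrow> L \<subseteq> P \<and> (\<forall>p\<in>L. \<forall>q\<in>L. compatible P le p q)"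

text \<open>aleph_1-sigma-linked: the range of every omega_1-sequence of conditions, i.e. every
  set of conditions of cardinality at most aleph_1, is covered by countably many linked sets.\<close>
definition aleph1_sigma_linked :: "'p set \<Rightarrow> ('p \<Rightarrow> 'p \<Rightarrow> bool) \<Rightarrow> bool" where
  "aleph1_sigma_linked P le \<longleftrightarrow>
     (\<forall>X \<subseteq> P. (card_of X, cardSuc (card_of (UNIV :: nat set))) \<in> ordLeq \<longrightarrow>
        (\<exists>L :: nat \<Rightarrow> 'p set. (\<forall>n. linked P le (L n)) \<and> X \<subseteq> (\<Union>n. L n)))"

text \<open>The condition p forces "T is special" iff there is a P-name for a function
  f : T \<rightarrow> omega that p forces to be injective on chains. Such a name is coded by
  F t n = the set of conditions below p forcing f(t) = n: for each t these sets are
  predense below p, and conditions forcing f(s) = n and f(t) = n for s <_T t are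
  incompatible.\<close>
definition forces_special ::
  "'p set \<Rightarrow> ('p \<Rightarrow> 'p \<Rightarrow> bool) \<Rightarrow> 'a set \<Rightarrow> ('a \<Rightarrow> 'a \<Rightarrow> bool) \<Rightarrow> 'p \<Rightarrow> bool" where
  "forces_special P le T lt p \<longleftrightarrow>
     (\<exists>F :: 'a \<Rightarrow> nat \<Rightarrow> 'p set.
        (\<forall>t\<in>T. \<forall>n. F t n \<subseteq> {q \<in> P. le q p}) \<and>
        (\<forall>t\<in>T. \<forall>r\<in>P. le r p \<longrightarrow> (\<exists>n. \<exists>q\<in>F t n. compatible P le r q)) \<and>
        (\<forall>s\<in>T. \<forall>t\<in>T. lt s t \<longrightarrow>
            (\<forall>n. \<forall>q\<in>F s n. \<forall>r\<in>F t n. \<not> compatible P le q r)))"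

definition forces_not_special ::
  "'p set \<Rightarrow> ('p \<Rightarrow> 'p \<Rightarrow> bool) \<Rightarrow> 'a set \<Rightarrow> ('a \<Rightarrow> 'a \<Rightarrow> bool) \<Rightarrow> bool" where
  "forces_not_special P le T lt \<longleftrightarrow> (\<forall>p\<in>P. \<not> forces_special P le T lt p)"

end

theory Submission
  imports Defs "HOL-Library.Nat_Bijection"
begin

unbundle cardinal_syntax

lemma card_bound:
  assumes "aronszajn T lt"
  shows "|T| \<le>o cardSuc |UNIV :: nat set|"
proof -
  define K where "K = cardSuc |UNIV :: nat set|"
  have CK: "Card_order K" unfolding K_def by (simp add: cardSuc_Card_order card_of_Card_order)
  hence WK: "Well_order K" by (simp add: card_order_on_well_order_on)
  have FK: "|Field K| =o K" using card_of_Field_ordIso[OF CK] .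
  have natK: "|UNIV :: nat set| <o K" unfolding K_def by (simp add: cardSuc_greater card_of_Card_order)
  have natFK: "|UNIV :: nat set| \<le>o |Field K|"
    using ordLess_imp_ordLeq[OF ordLess_ordIso_trans[OF natK ordIso_symmetric[OF FK]]] .
  have infK: "\<not> finite (Field K)"
    unfolding K_def using cardSuc_finite[OF card_of_Card_order, of "UNIV :: nat set"] by (simp add: Field_card_of)
  have tr: "is_tree T lt" using assms unfolding aronszajn_def by blast
  have cnt_le: "|A| \<le>o |UNIV :: nat set|" if cA: "countable A" for A :: "'a set"
  proof -
    obtain f :: "'a \<Rightarrow> nat" where "inj_on f A" using cA by (rule countableE)
    hence "\<exists>f :: 'a \<Rightarrow> nat. inj_on f A \<and> f ` A \<subseteq> UNIV" by blast
    thus ?thesis using card_of_ordLeq[of A "UNIV :: nat set"] by simp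
  qed
  have less: "pred_rel T lt t <o K" if t: "t \<in> T" for t
  proof -
    have W: "Well_order (pred_rel T lt t)" using tr t unfolding is_tree_def by blast
    have Fd: "Field (pred_rel T lt t) = pred_set T lt t"
      unfolding pred_rel_def Field_def by auto
    have c: "countable (pred_set T lt t)" using assms t unfolding aronszajn_def by blast
    have lt1: "|pred_set T lt t| <o K" using cnt_le[OF c] natK ordLeq_ordLess_trans by blast
    show ?thesis
    proof (rule ccontr)
      assume "\<not> pred_rel T lt t <o K"
      hence "K \<le>o pred_rel T lt t" using ordLess_or_ordLeq[OF W WK] by blast
      hence "|Field K| \<le>o |Field (pred_rel T lt t)|" by (rule card_of_mono2)
      hence "|Field K| \<le>o |pred_set T lt t|" using Fd by simp
      hence "K \<le>o |pred_set T lt t|" using ordIso_ordLeq_trans[OF ordIso_symmetric[OF FK]] by blast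
      thus False using lt1 not_ordLess_ordLeq by blast
    qed
  qed
  have ex: "\<exists>a\<in>Field K. pred_rel T lt t =o Restr K (underS K a)" if "t \<in> T" for t
  proof -
    have W: "Well_order (pred_rel T lt t)" using tr that unfolding is_tree_def by blast
    show ?thesis using less[OF that] ordLess_iff_ordIso_Restr[OF WK W] by simp
  qed
  define h where "h t = (SOME a. a \<in> Field K \<and> pred_rel T lt t =o Restr K (underS K a))" for t
  have h: "h t \<in> Field K \<and> pred_rel T lt t =o Restr K (underS K (h t))" if "t \<in> T" for t
    using someI_ex[of "\<lambda>a. a \<in> Field K \<and> pred_rel T lt t =o Restr K (underS K a)"] ex[OF that]
    unfolding h_def by blast
  have fib: "|{t\<in>T. h t = a}| \<le>o |Field K|" if aT: "a \<in> h ` T" for a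
  proof -
    obtain t0 where t0: "t0 \<in> T" "h t0 = a" using aT by blast
    have "{t\<in>T. h t = a} \<subseteq> tree_level T lt t0"
    proof
      fix u assume "u \<in> {t\<in>T. h t = a}"
      hence u: "u \<in> T" "h u = a" by auto
      have a1: "pred_rel T lt u =o Restr K (underS K a)" using h[OF u(1)] u by simp
      have a2: "Restr K (underS K a) =o pred_rel T lt t0" using h[OF t0(1)] t0 ordIso_symmetric by blast
      have "pred_rel T lt u =o pred_rel T lt t0" using ordIso_transitive[OF a1 a2] .
      thus "u \<in> tree_level T lt t0" unfolding tree_level_def using u by blast
    qed
    moreover have "countable (tree_level T lt t0)" using assms t0 unfolding aronszajn_def by blast
    ultimately have "countable {t\<in>T. h t = a}" using countable_subset by blast
    thus ?thesis using ordLeq_transitive[OF cnt_le natFK] by blast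
  qed
  have "h ` T \<subseteq> Field K" using h by blast
  hence img: "|h ` T| \<le>o |Field K|" by (rule card_of_mono1)
  have eq: "T = (\<Union>a\<in>h ` T. {t\<in>T. h t = a})" by auto
  have fib': "\<forall>a\<in>h ` T. |{t\<in>T. h t = a}| \<le>o |Field K|" using fib by blast
  have "|\<Union>a\<in>h ` T. {t\<in>T. h t = a}| \<le>o |Field K|"
    by (rule card_of_UNION_ordLeq_infinite[OF infK img fib'])
  hence "|T| \<le>o |Field K|" using eq by (rule ssubst[where P="\<lambda>X. |X| \<le>o |Field K|", rotated])
  from ordLeq_ordIso_trans[OF this FK] show ?thesis unfolding K_def .
qed

theorem lemma4:
  fixes T :: "'a set" and lt :: "'a \<Rightarrow> 'a \<Rightarrow> bool"
    and P :: "'p set" and le :: "'p \<Rightarrow> 'p \<Rightarrow> bool"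
  assumes "aronszajn T lt" and "\<not> special T lt"
    and "is_poset P le" and "aleph1_sigma_linked P le"
  shows "forces_not_special P le T lt"
  unfolding forces_not_special_def
proof (intro ballI notI)
  fix p assume p: "p \<in> P" and "forces_special P le T lt p"
  then obtain F :: "'a \<Rightarrow> nat \<Rightarrow> 'p set" where
    F1: "\<forall>t\<in>T. \<forall>n. F t n \<subseteq> {q \<in> P. le q p}" and
    F2: "\<forall>t\<in>T. \<forall>r\<in>P. le r p \<longrightarrow> (\<exists>n. \<exists>q\<in>F t n. compatible P le r q)" and
    F3: "\<forall>s\<in>T. \<forall>t\<in>T. lt s t \<longrightarrow> (\<forall>n. \<forall>q\<in>F s n. \<forall>r\<in>F t n. \<not> compatible P le q r)"
    unfolding forces_special_def by blast
  have pp: "le p p" using assms(3) p unfolding is_poset_def by blast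
  have ex: "\<exists>nq. snd nq \<in> F t (fst nq)" if tT: "t \<in> T" for t
  proof -
    obtain n0 q0 where "q0 \<in> F t n0" using F2 tT p pp by blast
    thus ?thesis by (intro exI[of _ "(n0, q0)"]) simp
  qed
  define nq where "nq t = (SOME nq. snd nq \<in> F t (fst nq))" for t
  have nq: "snd (nq t) \<in> F t (fst (nq t))" if "t \<in> T" for t
    using someI_ex[OF ex[OF that]] unfolding nq_def by blast
  define q where "q t = snd (nq t)" for t
  define n where "n t = fst (nq t)" for t
  have qF: "q t \<in> F t (n t)" if "t \<in> T" for t using nq[OF that] unfolding q_def n_def by simp
  have qP: "q ` T \<subseteq> P"
  proof
    fix x assume "x \<in> q ` T"
    then obtain t where t: "t \<in> T" "x = q t" by blast
    have "F t (n t) \<subseteq> {q \<in> P. le q p}" using F1 t(1) by blast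
    thus "x \<in> P" using qF[OF t(1)] t(2) by blast
  qed
  have "|q ` T| \<le>o |T|" by (rule card_of_image)
  hence "|q ` T| \<le>o cardSuc |UNIV :: nat set|"
    using card_bound[OF assms(1)] ordLeq_transitive by blast
  then obtain L :: "nat \<Rightarrow> 'p set" where L1: "\<forall>k. linked P le (L k)" and L2: "q ` T \<subseteq> (\<Union>k. L k)"
    using assms(4) qP unfolding aleph1_sigma_linked_def by (meson \<open>|q ` T| \<le>o cardSuc |UNIV :: nat set|\<close>)
  have exm: "\<exists>m. q t \<in> L m" if "t \<in> T" for t using L2 that by blast
  define m where "m t = (SOME m. q t \<in> L m)" for t
  have mL: "q t \<in> L (m t)" if "t \<in> T" for t using someI_ex[OF exm[OF that]] unfolding m_def by blast
  define A where "A k = {t\<in>T. prod_encode (m t, n t) = k}" for k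
  have "special T lt"
    unfolding special_def
  proof (intro exI conjI allI)
    fix k
    show "is_antichain T lt (A k)"
      unfolding is_antichain_def
    proof (intro conjI ballI)
      show "A k \<subseteq> T" unfolding A_def by blast
    next
      fix x y assume x: "x \<in> A k" and y: "y \<in> A k"
      hence xy: "x \<in> T" "y \<in> T" "m x = m y" "n x = n y" unfolding A_def
        using prod_encode_eq by auto
      show "\<not> lt x y"
      proof
        assume "lt x y"
        have "compatible P le (q x) (q y)"
          using L1 mL[OF xy(1)] mL[OF xy(2)] xy(3) unfolding linked_def by auto
        moreover have "q x \<in> F x (n x)" "q y \<in> F y (n x)" using qF[OF xy(1)] qF[OF xy(2)] xy(4) by auto
        ultimately show False using F3 xy(1,2) \<open>lt x y\<close> by blast
      qed
    qed
  next
    show "T = (\<Union>k. A k)" unfolding A_def by auto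
  qed
  thus False using assms(2) by blast
qed

end
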